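(* For non-zero integers $a,b$ let $f_{a,b}:(0,\infty)\to(0,\infty)$, $f_{a,b}(z)=z^{a/b}$ (real positive branch), and let $I\subseteq(0,\infty)$ have non-empty interior. Then there exist uncountably many $\zeta\in\mathscr{L}\cap I$ such that, for all non-zero integers $a,b$, $f_{a,b}(\zeta)\in\mathscr{L}$ holds if and only if $a/b\in\mathbb{Z}$. In particular, for any fixed coprime non-zero integers $a,b$ with $|b|\geq2$, the set $f_{a,b}(\mathscr{L}\cap(0,\infty))\cap\mathscr{L}$ is uncountable but $f_{a,b}(\mathscr{L}\cap(0,\infty))\not\subseteq\mathscr{L}$.
   Context: $\mathscr{L}$ is the set of Liouville numbers (real irrational $\zeta$ such that for every $\eta>0$ there are infinitely many rationals $y/x$, $x\geq1$, with $|\zeta-y/x|\leq x^{-\eta}$). *)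

theory Defs
  imports "HOL-Analysis.Analysis"
begin

text \<open>The rationals are counted via their representing pairs (x,y); for irrational zeta
this is equivalent to counting distinct rational values.\<close>
definition Liouville_set :: "real set" where
  "Liouville_set = {\<zeta>. \<zeta> \<notin> \<rat> \<and>
     (\<forall>\<eta>::real. \<eta> > 0 \<longrightarrow>
        infinite {(x::int, y::int). x \<ge> 1 \<and>
                   \<bar>\<zeta> - real_of_int y / real_of_int x\<bar> \<le> real_of_int x powr (- \<eta>)})}"

definition f_pow :: "int \<Rightarrow> int \<Rightarrow> real \<Rightarrow> real" where
  "f_pow a b z = z powr (real_of_int a / real_of_int b)"

end

theory Submission
  imports Defs
begin
definition apx :: "real \<Rightarrow> real \<Rightarrow> int \<Rightarrow> int \<Rightarrow> bool" where
  "apx \<xi> \<eta> x y \<longleftrightarrow> x \<ge> 1 \<and> \<bar>\<xi> - real_of_int y / real_of_int x\<bar> \<le> real_of_int x powr (- \<eta>)"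

lemma apx_le1:
  assumes "apx \<xi> \<eta> x y" "\<eta> \<ge> 0"
  shows "\<bar>\<xi> - real_of_int y / real_of_int x\<bar> \<le> 1"
proof -
  have x: "real_of_int x \<ge> 1" using assms(1) unfolding apx_def by auto
  have "real_of_int x powr (- \<eta>) \<le> real_of_int x powr 0"
    by (rule powr_mono) (use x assms(2) in auto)
  then have "real_of_int x powr (- \<eta>) \<le> 1" using x by simp
  then show ?thesis using assms(1) unfolding apx_def by linarith
qed

lemma fin_box:
  assumes "\<eta> \<ge> 0"
  shows "finite {(x,y). apx \<xi> \<eta> x y \<and> x \<le> X}"
proof -
  define B where "B = \<lceil>real_of_int X * (\<bar>\<xi>\<bar> + 1)\<rceil>"
  have "{(x,y). apx \<xi> \<eta> x y \<and> x \<le> X} \<subseteq> {1..X} \<times> {-B..B}"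
  proof
    fix p assume "p \<in> {(x,y). apx \<xi> \<eta> x y \<and> x \<le> X}"
    then obtain x y where p: "p = (x,y)" and h: "apx \<xi> \<eta> x y" "x \<le> X" by auto
    have x1: "x \<ge> 1" using h unfolding apx_def by auto
    have "\<bar>\<xi> - real_of_int y / real_of_int x\<bar> \<le> 1" using apx_le1[OF h(1) assms] .
    then have "\<bar>real_of_int y / real_of_int x\<bar> \<le> \<bar>\<xi>\<bar> + 1" by linarith
    moreover have "real_of_int x > 0" using x1 by simp
    ultimately have "\<bar>real_of_int y\<bar> \<le> (\<bar>\<xi>\<bar> + 1) * real_of_int x"
    proof -
      assume a1: "\<bar>real_of_int y / real_of_int x\<bar> \<le> \<bar>\<xi>\<bar> + 1" and a2: "real_of_int x > 0"
      have "\<bar>real_of_int y\<bar> = \<bar>real_of_int y / real_of_int x\<bar> * real_of_int x"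
        using a2 by (simp add: abs_divide)
      also have "\<dots> \<le> (\<bar>\<xi>\<bar> + 1) * real_of_int x"
        using a1 a2 by (intro mult_right_mono) auto
      finally show ?thesis .
    qed
    also have "\<dots> = real_of_int x * (\<bar>\<xi>\<bar> + 1)" by (rule mult.commute)
    also have "\<dots> \<le> real_of_int X * (\<bar>\<xi>\<bar> + 1)"
      using h(2) by (intro mult_right_mono) auto
    finally have "\<bar>real_of_int y\<bar> \<le> real_of_int B" unfolding B_def by linarith
    then have "\<bar>y\<bar> \<le> B" by linarith
    then show "p \<in> {1..X} \<times> {-B..B}" using p x1 h(2) by auto
  qed
  moreover have "finite ({1..X} \<times> {-B..B})" by simp
  ultimately show ?thesis by (rule finite_subset)
qed

lemma L_char:
  "\<xi> \<in> Liouville_set \<longleftrightarrow> \<xi> \<notin> \<rat> \<and> (\<forall>\<eta>>0. \<forall>X. \<exists>x y. apx \<xi> \<eta> x y \<and> x > X)"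
proof -
  have eq: "{(x::int, y::int). x \<ge> 1 \<and>
                   \<bar>\<xi> - real_of_int y / real_of_int x\<bar> \<le> real_of_int x powr (- \<eta>)}
       = {(x,y). apx \<xi> \<eta> x y}" for \<eta> unfolding apx_def by auto
  have inf: "infinite {(x,y). apx \<xi> \<eta> x y} \<longleftrightarrow> (\<forall>X. \<exists>x y. apx \<xi> \<eta> x y \<and> x > X)"
    if "\<eta> > 0" for \<eta>
  proof
    assume i: "infinite {(x,y). apx \<xi> \<eta> x y}"
    show "\<forall>X. \<exists>x y. apx \<xi> \<eta> x y \<and> x > X"
    proof (rule ccontr)
      assume "\<not> ?thesis"
      then obtain X where "\<forall>x y. apx \<xi> \<eta> x y \<longrightarrow> x \<le> X" by (auto simp: not_less)
      then have "{(x,y). apx \<xi> \<eta> x y} = {(x,y). apx \<xi> \<eta> x y \<and> x \<le> X}" by auto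
      with fin_box[of \<eta> \<xi> X] that i show False by auto
    qed
  next
    assume u: "\<forall>X. \<exists>x y. apx \<xi> \<eta> x y \<and> x > X"
    show "infinite {(x,y). apx \<xi> \<eta> x y}"
    proof
      assume f: "finite {(x,y). apx \<xi> \<eta> x y}"
      then have "finite (fst ` {(x,y). apx \<xi> \<eta> x y})" by auto
      define X where "X = Max (insert 0 (fst ` {(x,y). apx \<xi> \<eta> x y}))"
      have "\<forall>z\<in>fst ` {(x,y). apx \<xi> \<eta> x y}. z \<le> X"
        unfolding X_def using \<open>finite (fst ` _)\<close> by auto
      moreover obtain x y where "apx \<xi> \<eta> x y" "x > X" using u by blast
      ultimately show False by force
    qed
  qed
  show ?thesis unfolding Liouville_set_def using eq inf by auto
qed

lemma pow_diff_bound: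
  fixes y z M :: real
  assumes "\<bar>y\<bar> \<le> M" "\<bar>z\<bar> \<le> M"
  shows "\<bar>y ^ m - z ^ m\<bar> \<le> real m * M ^ (m - 1) * \<bar>y - z\<bar>"
proof -
  have M0: "M \<ge> 0" using assms by linarith
  have "\<bar>\<Sum>i<m. z ^ (m - Suc i) * y ^ i\<bar> \<le> (\<Sum>i<m. \<bar>z ^ (m - Suc i) * y ^ i\<bar>)"
    by (rule sum_abs)
  also have "\<dots> \<le> (\<Sum>i<m. M ^ (m - 1))"
  proof (rule sum_mono)
    fix i assume "i \<in> {..<m}"
    then have "m - Suc i + i = m - 1" by auto
    have "\<bar>z ^ (m - Suc i) * y ^ i\<bar> = \<bar>z\<bar> ^ (m - Suc i) * \<bar>y\<bar> ^ i" by (simp add: abs_mult power_abs)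
    also have "\<dots> \<le> M ^ (m - Suc i) * M ^ i"
      by (intro mult_mono power_mono assms) (auto simp: M0)
    also have "\<dots> = M ^ (m - 1)" using \<open>m - Suc i + i = m - 1\<close> by (metis power_add)
    finally show "\<bar>z ^ (m - Suc i) * y ^ i\<bar> \<le> M ^ (m - 1)" .
  qed
  also have "\<dots> = real m * M ^ (m - 1)" by simp
  finally have S: "\<bar>\<Sum>i<m. z ^ (m - Suc i) * y ^ i\<bar> \<le> real m * M ^ (m - 1)" .
  have "\<bar>y ^ m - z ^ m\<bar> = \<bar>y - z\<bar> * \<bar>\<Sum>i<m. z ^ (m - Suc i) * y ^ i\<bar>"
    by (subst power_diff_sumr2) (simp add: abs_mult)
  also have "\<dots> \<le> \<bar>y - z\<bar> * (real m * M ^ (m - 1))"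
    by (intro mult_left_mono S) auto
  finally show ?thesis by (simp add: mult.commute)
qed

lemma powr_neg_nat: "(x::real) > 0 \<Longrightarrow> x powr (- real k) = 1 / x ^ k"
  by (simp add: powr_minus powr_realpow divide_inverse)




lemma L_inv:
  assumes "\<zeta> \<in> Liouville_set" "\<zeta> > 0"
  shows "1 / \<zeta> \<in> Liouville_set"
proof -
  from assms have irr: "\<zeta> \<notin> \<rat>" and lv: "\<forall>\<eta>>0. \<forall>X. \<exists>x y. apx \<zeta> \<eta> x y \<and> x > X"
    by (auto simp: L_char)
  have "1 / \<zeta> \<notin> \<rat>"
  proof
    assume "1 / \<zeta> \<in> \<rat>"
    then have "1 / (1 / \<zeta>) \<in> \<rat>" by (rule Rats_divide[OF Rats_1])
    then show False using irr by simp
  qed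
  moreover have "\<forall>\<eta>>0. \<forall>X. \<exists>x y. apx (1 / \<zeta>) \<eta> x y \<and> x > X"
  proof (intro allI impI)
    fix \<eta> :: real and X :: int
    assume \<eta>: "\<eta> > 0"
    define K0 where "K0 = (2 / \<zeta>^2) * (2 * \<zeta>) powr \<eta>"
    define Q where "Q = max (max (2 / \<zeta>) (2 * \<bar>real_of_int X\<bar> / \<zeta>)) K0"
    obtain q p where a: "apx \<zeta> (\<eta> + 2) q p" and qQ: "q > \<lceil>Q\<rceil>"
      using lv \<eta> by (meson add_pos_pos zero_less_numeral)
    have q1: "real_of_int q \<ge> 1" and hq: "\<bar>\<zeta> - real_of_int p / real_of_int q\<bar> \<le> real_of_int q powr (- (\<eta> + 2))"
      using a unfolding apx_def by auto
    have qpos: "real_of_int q > 0" using q1 by linarith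
    have qQ': "real_of_int q > Q" using qQ by linarith
    have K0pos: "K0 > 0" unfolding K0_def using assms(2) by simp
    have "real_of_int q powr (- (\<eta> + 2)) \<le> real_of_int q powr (- 1)"
      by (rule powr_mono) (use q1 \<eta> in auto)
    also have "\<dots> = 1 / real_of_int q" using qpos by (simp add: powr_minus divide_inverse)
    also have "\<dots> \<le> \<zeta> / 2"
    proof -
      have "2 / \<zeta> < real_of_int q" using qQ' unfolding Q_def by linarith
      then have "2 < \<zeta> * real_of_int q" using assms(2) by (simp add: divide_less_eq mult.commute)
      then show ?thesis using qpos by (simp add: divide_le_eq mult.commute)
    qed
    finally have close: "\<bar>\<zeta> - real_of_int p / real_of_int q\<bar> \<le> \<zeta> / 2" using hq by linarith
    then have "real_of_int p / real_of_int q \<ge> \<zeta> / 2" "real_of_int p / real_of_int q \<le> 2 * \<zeta>"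
      using assms(2) by linarith+
    then have plo: "real_of_int p \<ge> \<zeta> * real_of_int q / 2" and phi: "real_of_int p \<le> 2 * \<zeta> * real_of_int q"
      using qpos by (simp_all add: le_divide_eq divide_le_eq mult.commute)
    have ppos: "real_of_int p > 0" proof -
      have "\<zeta> * real_of_int q / 2 > 0" using qpos assms(2) by simp
      then show ?thesis using plo by linarith
    qed
    have "real_of_int p > real_of_int X"
    proof -
      have "2 * \<bar>real_of_int X\<bar> / \<zeta> < real_of_int q" using qQ' unfolding Q_def by linarith
      then have "2 * \<bar>real_of_int X\<bar> < \<zeta> * real_of_int q" using assms(2) by (simp add: divide_less_eq mult.commute)
      then show ?thesis using plo by linarith
    qed
    then have pX: "p > X" by linarith
    have p1: "p \<ge> 1" using ppos by linarith
    have eq: "1 / \<zeta> - real_of_int q / real_of_int p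
        = (real_of_int q / (\<zeta> * real_of_int p)) * (real_of_int p / real_of_int q - \<zeta>)"
      using qpos ppos assms(2) by (simp add: field_simps)
    have fac: "real_of_int q / (\<zeta> * real_of_int p) \<le> 2 / \<zeta>^2"
      using plo qpos ppos assms(2) by (simp add: field_simps power2_eq_square)
    have "\<bar>1 / \<zeta> - real_of_int q / real_of_int p\<bar>
        = (real_of_int q / (\<zeta> * real_of_int p)) * \<bar>\<zeta> - real_of_int p / real_of_int q\<bar>"
      unfolding eq using qpos ppos assms(2) by (simp add: abs_mult abs_minus_commute)
    also have "\<dots> \<le> (2 / \<zeta>^2) * real_of_int q powr (- (\<eta> + 2))"
      using fac hq qpos ppos assms(2) by (intro mult_mono) auto
    also have "real_of_int q powr (- (\<eta> + 2)) = real_of_int q powr (- \<eta>) / real_of_int q ^ 2"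
    proof -
      have "real_of_int q powr (- (\<eta> + 2)) = real_of_int q powr (- \<eta> + (- 2))"
        by (rule arg_cong[where f="\<lambda>t. real_of_int q powr t"]) simp
      also have "\<dots> = real_of_int q powr (- \<eta>) * real_of_int q powr (- 2)" by (rule powr_add)
      also have "real_of_int q powr (- 2) = 1 / real_of_int q ^ 2"
        using powr_neg_nat[of "real_of_int q" 2] qpos by simp
      finally show ?thesis by simp
    qed
    also have "(2 / \<zeta>^2) * (real_of_int q powr (- \<eta>) / real_of_int q ^ 2)
        \<le> (2 / \<zeta>^2) * (real_of_int q powr (- \<eta>) / K0)"
    proof -
      have "K0 \<le> real_of_int q ^ 2"
      proof -
        have "K0 < real_of_int q" using qQ' unfolding Q_def by linarith
        also have "\<dots> \<le> real_of_int q ^ 2" using q1 by (simp add: power2_eq_square)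
        finally show ?thesis by linarith
      qed
      then show ?thesis using K0pos assms(2) qpos
        by (intro mult_left_mono divide_left_mono) auto
    qed
    also have "\<dots> = real_of_int q powr (- \<eta>) * (2 * \<zeta>) powr (- \<eta>)"
      unfolding K0_def using assms(2) by (simp add: powr_minus field_simps)
    also have "\<dots> = (2 * \<zeta> * real_of_int q) powr (- \<eta>)"
      using assms(2) qpos by (simp add: powr_mult mult.commute)
    also have "\<dots> \<le> real_of_int p powr (- \<eta>)"
      by (rule powr_mono2') (use \<eta> ppos phi in auto)
    finally have "apx (1 / \<zeta>) \<eta> p q" unfolding apx_def using p1 by simp
    then show "\<exists>x y. apx (1 / \<zeta>) \<eta> x y \<and> x > X" using pX by blast
  qed
  ultimately show ?thesis by (simp add: L_char)
qed




lemma apx_pow_bound: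
  assumes "apx \<zeta> \<eta> q p" "\<eta> \<ge> 0" "\<zeta> > 0"
  shows "\<bar>\<zeta> ^ m - (real_of_int p / real_of_int q) ^ m\<bar>
          \<le> real m * (\<zeta> + 1) ^ (m - 1) * \<bar>\<zeta> - real_of_int p / real_of_int q\<bar>"
proof -
  have "\<bar>\<zeta> - real_of_int p / real_of_int q\<bar> \<le> 1" using apx_le1[OF assms(1,2)] .
  then have "\<bar>real_of_int p / real_of_int q\<bar> \<le> \<zeta> + 1" using assms(3) by linarith
  moreover have "\<bar>\<zeta>\<bar> \<le> \<zeta> + 1" using assms(3) by simp
  ultimately show ?thesis using pow_diff_bound by blast
qed

lemma L_pow:
  assumes "\<zeta> \<in> Liouville_set" "\<zeta> > 0" "m \<ge> 1"
  shows "\<zeta> ^ m \<in> Liouville_set"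
proof -
  from assms have irr: "\<zeta> \<notin> \<rat>" and lv: "\<forall>\<eta>>0. \<forall>X. \<exists>x y. apx \<zeta> \<eta> x y \<and> x > X"
    by (auto simp: L_char)
  define C where "C = real m * (\<zeta> + 1) ^ (m - 1)"
  have C1: "C \<ge> 1"
  proof -
    have "(\<zeta> + 1) ^ (m - 1) \<ge> 1" using assms(2) by (simp add: one_le_power)
    moreover have "real m \<ge> 1" using assms(3) by simp
    ultimately show ?thesis unfolding C_def using mult_mono[of 1 "real m" 1 "(\<zeta> + 1) ^ (m - 1)"] by simp
  qed
  have "\<zeta> ^ m \<notin> \<rat>"
  proof
    assume "\<zeta> ^ m \<in> \<rat>"
    then obtain R S where S0: "S > 0" and RS: "\<zeta> ^ m = real_of_int R / real_of_int S"
      by (auto elim: Rats_cases')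
    obtain q p where a: "apx \<zeta> (real m + 1) q p" and qX: "q > \<lceil>real_of_int S * C\<rceil>"
      using lv by (metis add_pos_pos of_nat_0_le_iff zero_less_one le_add_same_cancel2 add_nonneg_pos)
    have q1: "real_of_int q \<ge> 1" and hq: "\<bar>\<zeta> - real_of_int p / real_of_int q\<bar> \<le> real_of_int q powr (- (real m + 1))"
      using a unfolding apx_def by auto
    have qpos: "real_of_int q > 0" using q1 by linarith
    have qSC: "real_of_int q > real_of_int S * C" using qX by linarith
    have b: "\<bar>\<zeta> ^ m - (real_of_int p / real_of_int q) ^ m\<bar> \<le> C * (1 / real_of_int q ^ (m + 1))"
    proof -
      have "\<bar>\<zeta> ^ m - (real_of_int p / real_of_int q) ^ m\<bar> \<le> C * \<bar>\<zeta> - real_of_int p / real_of_int q\<bar>"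
        using apx_pow_bound[OF a _ assms(2), of m] unfolding C_def by simp
      also have "\<dots> \<le> C * real_of_int q powr (- (real m + 1))"
        using hq C1 by (intro mult_left_mono) auto
      also have "real_of_int q powr (- (real m + 1)) = 1 / real_of_int q ^ (m + 1)"
      proof -
        have e: "- (real m + 1) = - real (m + 1)" by simp
        show ?thesis unfolding e by (rule powr_neg_nat[OF qpos])
      qed
      finally show ?thesis .
    qed
    show False
    proof (cases "(real_of_int p / real_of_int q) ^ m = \<zeta> ^ m")
      case True
      have "\<bar>real_of_int p / real_of_int q\<bar> ^ m = \<bar>(real_of_int p / real_of_int q) ^ m\<bar>"
        by (rule power_abs[symmetric])
      also have "\<dots> = \<bar>\<zeta> ^ m\<bar>" using True by (rule arg_cong)
      also have "\<dots> = \<zeta> ^ m" using assms(2) by simp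
      finally have "\<bar>real_of_int p / real_of_int q\<bar> ^ m = \<zeta> ^ m" .
      then have "\<bar>real_of_int p / real_of_int q\<bar> = \<zeta>"
        by (rule power_eq_imp_eq_base) (use assms(2,3) in simp_all)
      moreover have "\<bar>real_of_int p / real_of_int q\<bar> = real_of_int \<bar>p\<bar> / real_of_int q"
        using qpos by (simp add: abs_divide)
      moreover have "real_of_int \<bar>p\<bar> / real_of_int q \<in> \<rat>" by (intro Rats_divide Rats_of_int)
      ultimately show False using irr by simp
    next
      case False
      define Nn where "Nn = R * q ^ m - S * p ^ m"
      have eqN: "\<zeta> ^ m - (real_of_int p / real_of_int q) ^ m
          = real_of_int Nn / (real_of_int S * real_of_int q ^ m)"
        unfolding Nn_def RS using qpos S0 by (simp add: field_simps power_divide)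
      have "Nn \<noteq> 0" using False eqN by auto
      then have N1: "\<bar>real_of_int Nn\<bar> \<ge> 1" by linarith
      have "1 / (real_of_int S * real_of_int q ^ m) \<le> \<bar>real_of_int Nn\<bar> / (real_of_int S * real_of_int q ^ m)"
        using N1 S0 qpos by (intro divide_right_mono) auto
      also have "\<dots> = \<bar>\<zeta> ^ m - (real_of_int p / real_of_int q) ^ m\<bar>"
        unfolding eqN using S0 qpos by (simp add: abs_divide abs_mult)
      also have "\<dots> \<le> C * (1 / real_of_int q ^ (m + 1))" by (rule b)
      finally have "1 / (real_of_int S * real_of_int q ^ m) \<le> C / (real_of_int q ^ m * real_of_int q)"
        by (simp add: mult.commute)
      then have "real_of_int q ^ m * real_of_int q \<le> C * (real_of_int S * real_of_int q ^ m)"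
        using S0 qpos by (simp add: field_simps)
      then have "real_of_int q ^ m * real_of_int q \<le> real_of_int q ^ m * (real_of_int S * C)"
        by (simp add: algebra_simps)
      then have "real_of_int q \<le> real_of_int S * C"
        using qpos by (simp add: mult_le_cancel_left)
      then show False using qSC by linarith
    qed
  qed
  moreover have "\<forall>\<eta>>0. \<forall>X. \<exists>x y. apx (\<zeta> ^ m) \<eta> x y \<and> x > X"
  proof (intro allI impI)
    fix \<eta> :: real and X :: int
    assume \<eta>: "\<eta> > 0"
    have e: "real m * \<eta> + 1 > 0" using \<eta> by (simp add: add_nonneg_pos)
    obtain q p where a: "apx \<zeta> (real m * \<eta> + 1) q p" and qX: "q > max X \<lceil>C\<rceil>"
      using lv e by blast
    have q1: "real_of_int q \<ge> 1" and hq: "\<bar>\<zeta> - real_of_int p / real_of_int q\<bar> \<le> real_of_int q powr (- (real m * \<eta> + 1))"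
      using a unfolding apx_def by auto
    have qpos: "real_of_int q > 0" using q1 by linarith
    have qC: "real_of_int q > C" using qX by linarith
    have "\<bar>\<zeta> ^ m - real_of_int (p ^ m) / real_of_int (q ^ m)\<bar> = \<bar>\<zeta> ^ m - (real_of_int p / real_of_int q) ^ m\<bar>"
      by (simp add: power_divide)
    also have "\<dots> \<le> C * \<bar>\<zeta> - real_of_int p / real_of_int q\<bar>"
      using apx_pow_bound[OF a _ assms(2), of m] e unfolding C_def by simp
    also have "\<dots> \<le> C * real_of_int q powr (- (real m * \<eta> + 1))"
      using hq C1 by (intro mult_left_mono) auto
    also have "real_of_int q powr (- (real m * \<eta> + 1)) = real_of_int q powr (- (real m * \<eta>)) * (1 / real_of_int q)"
    proof -
      have "real_of_int q powr (- (real m * \<eta> + 1)) = real_of_int q powr (- (real m * \<eta>) + (- 1))"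
        by (rule arg_cong[where f="\<lambda>t. real_of_int q powr t"]) simp
      also have "\<dots> = real_of_int q powr (- (real m * \<eta>)) * real_of_int q powr (- 1)" by (rule powr_add)
      also have "real_of_int q powr (- 1) = 1 / real_of_int q"
        using powr_neg_nat[of "real_of_int q" 1] qpos by simp
      finally show ?thesis .
    qed
    also have "C * (real_of_int q powr (- (real m * \<eta>)) * (1 / real_of_int q))
        = real_of_int q powr (- (real m * \<eta>)) * (C / real_of_int q)" by simp
    also have "\<dots> \<le> real_of_int q powr (- (real m * \<eta>)) * 1"
      using qC qpos by (intro mult_left_mono) auto
    also have "real_of_int q powr (- (real m * \<eta>)) * 1 = real_of_int (q ^ m) powr (- \<eta>)"
      using qpos by (simp add: powr_realpow[symmetric] powr_powr del: powr_realpow)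
    finally have h: "\<bar>\<zeta> ^ m - real_of_int (p ^ m) / real_of_int (q ^ m)\<bar> \<le> real_of_int (q ^ m) powr (- \<eta>)" .
    have "q \<le> q ^ m" using q1 assms(3)
      by (metis One_nat_def of_int_1_le_iff power_increasing power_one_right)
    then have "q ^ m > X" "q ^ m \<ge> 1" using qX q1 by auto
    then have "apx (\<zeta> ^ m) \<eta> (q ^ m) (p ^ m) \<and> q ^ m > X" unfolding apx_def using h by simp
    then show "\<exists>x y. apx (\<zeta> ^ m) \<eta> x y \<and> x > X" by blast
  qed
  ultimately show ?thesis by (simp add: L_char)
qed




definition nn :: "nat \<Rightarrow> nat \<Rightarrow> nat" where "nn N k = 2 * N * fact (k + 1)"
definition dd :: "nat set \<Rightarrow> nat \<Rightarrow> int" where "dd S j = (if j \<in> S then 8 else 4)"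
fun pp :: "nat \<Rightarrow> int \<Rightarrow> nat set \<Rightarrow> nat \<Rightarrow> int" where
  "pp N A S 0 = A"
| "pp N A S (Suc k) = pp N A S k * 3 ^ (nn N (Suc k) - nn N k) + dd S k"
definition tm :: "nat \<Rightarrow> nat set \<Rightarrow> nat \<Rightarrow> real" where
  "tm N S j = real_of_int (dd S j) / 3 ^ nn N (Suc j)"
definition zeta :: "nat \<Rightarrow> int \<Rightarrow> nat set \<Rightarrow> real" where
  "zeta N A S = real_of_int A / 3 ^ nn N 0 + suminf (tm N S)"

lemma nn_Suc: "nn N (Suc k) = (k + 2) * nn N k"
  unfolding nn_def by (simp add: algebra_simps)

lemma nn_Suc': "nn N (Suc k) = nn N k + (k + 1) * nn N k"
  unfolding nn_Suc by (simp add: algebra_simps)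

lemma nn_ge: assumes "N \<ge> 1" shows "nn N k \<ge> 2 * (k + 1)"
proof -
  have "k + 1 \<le> fact (k + 1)" by (rule fact_ge_self)
  then have "2 * (k + 1) \<le> 2 * N * fact (k + 1)" using assms
    by (metis mult_le_mono mult.assoc mult_le_mono2 nat_mult_1 )
  then show ?thesis unfolding nn_def .
qed

lemma nn_even: "even (nn N k)" unfolding nn_def by simp

lemma nn_diff: "nn N (Suc k) - nn N k = (k + 1) * nn N k"
  using nn_Suc'[of N k] by simp

lemma nn_add: assumes "N \<ge> 1" shows "nn N (k + i) \<ge> nn N k + i"
proof (induction i)
  case 0 then show ?case by simp
next
  case (Suc i)
  have "nn N (Suc (k + i)) = nn N (k + i) + (k + i + 1) * nn N (k + i)" by (rule nn_Suc')
  moreover have "(k + i + 1) * nn N (k + i) \<ge> 1"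
    using nn_ge[OF assms, of "k + i"] by (simp add: Suc_le_eq)
  ultimately show ?case using Suc by simp
qed

lemma nn_mono: assumes "N \<ge> 1" "k \<le> l" shows "nn N k \<le> nn N l"
  using nn_add[OF assms(1), of k "l - k"] assms(2) by simp

lemma dd_bounds: "4 \<le> dd S j" "dd S j \<le> 8" "(4::int) dvd dd S j"
  unfolding dd_def by auto

lemma tm_nonneg: "tm N S j \<ge> 0"
  unfolding tm_def using dd_bounds(1)[of S j] by simp

lemma tm_le: assumes "N \<ge> 1"
  shows "tm N S (j + k) \<le> 8 / 3 ^ nn N (Suc k) * (1/3) ^ j"
proof -
  have "nn N (Suc k + j) \<ge> nn N (Suc k) + j" by (rule nn_add[OF assms])
  then have "(3::real) ^ nn N (Suc k) * 3 ^ j \<le> 3 ^ nn N (Suc (j + k))"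
    by (simp add: power_add[symmetric] add.commute)
  then have "8 / (3::real) ^ nn N (Suc (j + k)) \<le> 8 / ((3::real) ^ nn N (Suc k) * 3 ^ j)"
    by (intro divide_left_mono) auto
  moreover have "tm N S (j + k) \<le> 8 / (3::real) ^ nn N (Suc (j + k))"
    unfolding tm_def using dd_bounds(2)[of S "j + k"] by (intro divide_right_mono) auto
  ultimately show ?thesis by (simp add: power_one_over divide_divide_eq_left)
qed

lemma summable_tm: assumes "N \<ge> 1" shows "summable (tm N S)"
proof (rule summable_comparison_test')
  show "summable (\<lambda>j. 8 / 3 ^ nn N (Suc 0) * (1/3::real) ^ j)"
    by (intro summable_mult summable_geometric) simp
  fix j assume "j \<ge> (0::nat)"
  show "norm (tm N S j) \<le> 8 / 3 ^ nn N (Suc 0) * (1/3) ^ j"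
    using tm_le[OF assms, of S j 0] tm_nonneg[of N S j] by simp
qed

lemma pp_real: "real_of_int (pp N A S k) / 3 ^ nn N k = real_of_int A / 3 ^ nn N 0 + (\<Sum>j<k. tm N S j)"
  if "N \<ge> 1"
proof (induction k)
  case 0 then show ?case by simp
next
  case (Suc k)
  have e: "(3::real) ^ nn N (Suc k) = 3 ^ nn N k * 3 ^ (nn N (Suc k) - nn N k)"
    using nn_mono[OF that, of k "Suc k"] by (simp add: power_add[symmetric])
  have "real_of_int (pp N A S (Suc k)) / 3 ^ nn N (Suc k)
      = real_of_int (pp N A S k) / 3 ^ nn N k + tm N S k"
    unfolding tm_def e by (simp add: field_simps)
  then show ?case using Suc by simp
qed

definition rr :: "nat \<Rightarrow> int \<Rightarrow> nat set \<Rightarrow> nat \<Rightarrow> real" where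
  "rr N A S k = real_of_int (pp N A S k) / 3 ^ nn N k"

lemma tail_eq: assumes "N \<ge> 1"
  shows "zeta N A S - rr N A S k = (\<Sum>j. tm N S (j + k))"
proof -
  have "suminf (tm N S) = (\<Sum>j. tm N S (j + k)) + sum (tm N S) {..<k}"
    by (rule suminf_split_initial_segment[OF summable_tm[OF assms]])
  then show ?thesis unfolding zeta_def rr_def pp_real[OF assms] by simp
qed

lemma tail_bounds: assumes "N \<ge> 1"
  shows "4 / 3 ^ nn N (Suc k) \<le> zeta N A S - rr N A S k"
    and "zeta N A S - rr N A S k \<le> 12 / 3 ^ nn N (Suc k)"
proof -
  have sm: "summable (\<lambda>j. tm N S (j + k))"
    using summable_tm[OF assms] by (simp add: summable_iff_shift)
  have "(\<Sum>j. tm N S (Suc j + k)) = (\<Sum>j. tm N S (j + k)) - tm N S (0 + k)"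
    using suminf_split_head[OF sm] by simp
  then have "(\<Sum>j. tm N S (j + k)) = tm N S k + (\<Sum>j. tm N S (Suc j + k))" by simp
  moreover have "(\<Sum>j. tm N S (Suc j + k)) \<ge> 0"
    by (intro suminf_nonneg) (use sm summable_iff_shift[of "\<lambda>j. tm N S (j + k)" 1] in \<open>auto simp: tm_nonneg\<close>)
  moreover have "tm N S k \<ge> 4 / 3 ^ nn N (Suc k)"
    unfolding tm_def using dd_bounds(1)[of S k] by (intro divide_right_mono) auto
  ultimately show "4 / 3 ^ nn N (Suc k) \<le> zeta N A S - rr N A S k"
    unfolding tail_eq[OF assms] by simp
  have "(\<Sum>j. tm N S (j + k)) \<le> (\<Sum>j. 8 / 3 ^ nn N (Suc k) * (1/3::real) ^ j)"
    by (intro suminf_le sm tm_le[OF assms] summable_mult summable_geometric) simp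
  also have "\<dots> = 8 / 3 ^ nn N (Suc k) * (\<Sum>j. (1/3::real) ^ j)"
    by (intro suminf_mult summable_geometric) simp
  also have "(\<Sum>j. (1/3::real) ^ j) = 3/2"
    using suminf_geometric[of "1/3::real"] by simp
  finally show "zeta N A S - rr N A S k \<le> 12 / 3 ^ nn N (Suc k)"
    unfolding tail_eq[OF assms] by simp
qed

lemma nine_pow_mod: "(4::int) dvd 9 ^ t - 1"
proof (induction t)
  case 0 then show ?case by simp
next
  case (Suc t)
  from Suc obtain c where c: "(9::int) ^ t - 1 = 4 * c" by (auto simp: dvd_def)
  have "(9::int) ^ Suc t - 1 = 9 * (9 ^ t - 1) + 8" by simp
  also have "\<dots> = 4 * (9 * c + 2)" unfolding c by simp
  finally show ?case by simp
qed

lemma pp_mod: "(4::int) dvd pp N A S k - A"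
proof (induction k)
  case 0 then show ?case by simp
next
  case (Suc k)
  define t where "t = (k + 1) * (N * fact (k + 1))"
  have t: "nn N (Suc k) - nn N k = 2 * t"
    unfolding nn_diff t_def nn_def by (simp add: algebra_simps)
  have e: "(3::int) ^ (nn N (Suc k) - nn N k) = 9 ^ t" unfolding t by (simp add: power_mult)
  have eqp: "pp N A S (Suc k) - A = (pp N A S k - A) * 9 ^ t + A * (9 ^ t - 1) + dd S k"
    by (simp add: e algebra_simps)
  moreover have "4 dvd (pp N A S k - A) * 9 ^ t" using Suc by simp
  moreover have "4 dvd A * (9 ^ t - 1)" using nine_pow_mod[of t] by simp
  moreover have "4 dvd dd S k" by (rule dd_bounds)
  ultimately have "4 dvd (pp N A S k - A) * 9 ^ t + A * (9 ^ t - 1) + dd S k"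
    by (intro dvd_add) auto
  then show ?case by (simp only: eqp)
qed




lemma real_lt_3pow: "real n < (3::real) ^ n"
proof (induction n)
  case 0 then show ?case by simp
next
  case (Suc n)
  have "(1::real) \<le> 3 ^ n" by (simp add: one_le_power)
  moreover have "real (Suc n) = real n + 1" by simp
  moreover have "(3::real) ^ Suc n = 3 * 3 ^ n" by simp
  ultimately show ?case using Suc.IH by linarith
qed

lemma three_split: "(3::real) ^ nn N (Suc k) = 3 ^ nn N k * 3 ^ ((k + 1) * nn N k)"
  unfolding nn_Suc' by (simp add: power_add)

lemma gap: assumes "N \<ge> 1"
  shows "0 < zeta N A S - rr N A S k" "zeta N A S - rr N A S k \<le> 12 / 3 ^ nn N (Suc k)"
proof -
  have "0 < 4 / (3::real) ^ nn N (Suc k)" by simp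
  then show "0 < zeta N A S - rr N A S k" using tail_bounds(1)[OF assms, of k A S] by linarith
  show "zeta N A S - rr N A S k \<le> 12 / 3 ^ nn N (Suc k)" by (rule tail_bounds(2)[OF assms])
qed

lemma zeta_irr: assumes "N \<ge> 1" shows "zeta N A S \<notin> \<rat>"
proof
  assume "zeta N A S \<in> \<rat>"
  then obtain R S0 where S0: "S0 > 0" and RS: "zeta N A S = real_of_int R / real_of_int S0"
    by (auto elim: Rats_cases')
  define k where "k = nat (12 * S0)"
  have rk: "real k = 12 * real_of_int S0" unfolding k_def using S0 by simp
  define q where "q = (3::real) ^ nn N k"
  have qpos: "q > 0" unfolding q_def by simp
  define M where "M = R * 3 ^ nn N k - S0 * pp N A S k"
  have tq: "zeta N A S - rr N A S k = real_of_int M / (real_of_int S0 * q)"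
    unfolding M_def RS rr_def q_def using S0 by (simp add: field_simps)
  have "real_of_int M = (zeta N A S - rr N A S k) * (real_of_int S0 * q)"
    using tq S0 qpos by (simp add: field_simps)
  moreover have "(zeta N A S - rr N A S k) * (real_of_int S0 * q) > 0"
    using gap(1)[OF assms, of A S k] S0 qpos by (intro mult_pos_pos) auto
  ultimately have "real_of_int M > 0" by simp
  then have "M \<ge> 1" by simp
  then have M1: "real_of_int M \<ge> 1" by simp
  have "1 / (real_of_int S0 * q) \<le> real_of_int M / (real_of_int S0 * q)"
    using M1 S0 qpos by (intro divide_right_mono) auto
  also have "\<dots> \<le> 12 / 3 ^ nn N (Suc k)" unfolding tq[symmetric] by (rule gap(2)[OF assms])
  also have "\<dots> = 12 / (q * 3 ^ ((k + 1) * nn N k))" unfolding three_split q_def ..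
  finally have "1 / (real_of_int S0 * q) \<le> 12 / (q * 3 ^ ((k + 1) * nn N k))" .
  then have "(3::real) ^ ((k + 1) * nn N k) \<le> 12 * real_of_int S0"
    using S0 qpos by (simp add: field_simps)
  moreover have "(3::real) ^ (k + 1) \<le> 3 ^ ((k + 1) * nn N k)"
    using nn_ge[OF assms, of k] by (intro power_increasing) auto
  moreover have "real (k + 1) < (3::real) ^ (k + 1)" by (rule real_lt_3pow)
  ultimately show False using rk by simp
qed

lemma zeta_apx: assumes "N \<ge> 1" "\<eta> > 0" "real k \<ge> \<eta>"
  shows "apx (zeta N A S) \<eta> (3 ^ nn N k) (pp N A S k)"
proof -
  define a where "a = real (nn N (Suc k))"
  define b where "b = \<eta> * real (nn N k)"
  have ab: "a - b \<ge> 4"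
  proof -
    have "a - b = (real k + 2 - \<eta>) * real (nn N k)" unfolding a_def b_def nn_Suc by (simp add: algebra_simps)
    moreover have "real (nn N k) \<ge> 2" using nn_ge[OF assms(1), of k] by simp
    moreover have "real k + 2 - \<eta> \<ge> 2" using assms(3) by simp
    ultimately show ?thesis using mult_mono[of 2 "real k + 2 - \<eta>" 2 "real (nn N k)"] by simp
  qed
  have "\<bar>zeta N A S - real_of_int (pp N A S k) / real_of_int (3 ^ nn N k)\<bar> = zeta N A S - rr N A S k"
    using gap(1)[OF assms(1), of A S k] unfolding rr_def by simp
  also have "\<dots> \<le> 12 / 3 ^ nn N (Suc k)" by (rule gap(2)[OF assms(1)])
  also have "(3::real) ^ nn N (Suc k) = 3 powr a"
    unfolding a_def by (rule powr_realpow[symmetric]) simp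
  also have "12 / 3 powr a \<le> 3 powr (a - b) / 3 powr a"
  proof -
    have "(3::real) powr 4 \<le> 3 powr (a - b)" using ab by (intro powr_mono) auto
    moreover have "(3::real) powr 4 = 81" by (simp add: powr_numeral)
    ultimately show ?thesis by (intro divide_right_mono) auto
  qed
  also have "3 powr (a - b) / 3 powr a = (3::real) powr (- b)"
    by (simp add: powr_diff powr_minus divide_inverse)
  also have "(3::real) powr (- b) = real_of_int (3 ^ nn N k) powr (- \<eta>)"
    unfolding b_def by (simp add: powr_realpow[symmetric] powr_powr mult.commute del: powr_realpow)
  finally show ?thesis unfolding apx_def by simp
qed

lemma zeta_L: assumes "N \<ge> 1" shows "zeta N A S \<in> Liouville_set"
proof -
  have "\<forall>\<eta>>0. \<forall>X. \<exists>x y. apx (zeta N A S) \<eta> x y \<and> x > X"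
  proof (intro allI impI)
    fix \<eta> :: real and X :: int assume \<eta>: "\<eta> > 0"
    define k where "k = nat X + nat \<lceil>\<eta>\<rceil>"
    have k1: "real k \<ge> \<eta>" unfolding k_def by linarith
    have "real_of_int X \<le> real k" unfolding k_def by linarith
    also have "real k \<le> real (nn N k)" using nn_ge[OF assms, of k] by simp
    also have "real (nn N k) < 3 ^ nn N k" by (rule real_lt_3pow)
    finally have "X < 3 ^ nn N k" by (metis of_int_less_iff of_int_numeral of_int_power)
    then show "\<exists>x y. apx (zeta N A S) \<eta> x y \<and> x > X" using zeta_apx[OF assms \<eta> k1] by blast
  qed
  then show ?thesis using zeta_irr[OF assms] by (simp add: L_char)
qed

lemma pp_eq: "(\<forall>j<k. (j \<in> S) = (j \<in> T)) \<Longrightarrow> pp N A S k = pp N A T k"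
proof (induction k)
  case 0 then show ?case by simp
next
  case (Suc k)
  then have "dd S k = dd T k" unfolding dd_def by auto
  then show ?case using Suc by simp
qed

lemma zeta_inj: assumes "N \<ge> 1" "S \<noteq> T" shows "zeta N A S \<noteq> zeta N A T"
proof -
  have "\<exists>k. (k \<in> S) \<noteq> (k \<in> T)" using assms(2) by blast
  then obtain k where k: "(k \<in> S) \<noteq> (k \<in> T)" and min: "\<forall>j<k. (j \<in> S) = (j \<in> T)"
    using exists_least_iff[of "\<lambda>k. (k \<in> S) \<noteq> (k \<in> T)"] by blast
  have e: "pp N A S k = pp N A T k" by (rule pp_eq[OF min])
  have "\<bar>dd S k - dd T k\<bar> = 4" using k unfolding dd_def by auto
  then have d4: "\<bar>pp N A S (Suc k) - pp N A T (Suc k)\<bar> = 4" using e by simp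
  define Q where "Q = (3::real) ^ nn N (Suc k)"
  have Qpos: "Q > 0" unfolding Q_def by simp
  have rdiff: "\<bar>rr N A S (Suc k) - rr N A T (Suc k)\<bar> = 4 / Q"
  proof -
    have "rr N A S (Suc k) - rr N A T (Suc k) = real_of_int (pp N A S (Suc k) - pp N A T (Suc k)) / Q"
      unfolding rr_def Q_def by (simp add: diff_divide_distrib del: pp.simps)
    moreover have "real_of_int \<bar>pp N A S (Suc k) - pp N A T (Suc k)\<bar> = 4"
      using d4 by (simp del: pp.simps)
    ultimately show ?thesis using Qpos by (simp add: abs_divide del: pp.simps)
  qed
  have "(3::real) ^ nn N (Suc (Suc k)) = Q * 3 ^ ((k + 2) * nn N (Suc k))"
    unfolding Q_def three_split by simp
  moreover have "(9::real) \<le> 3 ^ ((k + 2) * nn N (Suc k))"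
  proof -
    have "(3::real) ^ 2 \<le> 3 ^ ((k + 2) * nn N (Suc k))"
      using nn_ge[OF assms(1), of "Suc k"] by (intro power_increasing) (auto simp: mult_le_mono)
    then show ?thesis by simp
  qed
  ultimately have Q2: "(3::real) ^ nn N (Suc (Suc k)) \<ge> 9 * Q" using Qpos by simp
  have t: "12 / (3::real) ^ nn N (Suc (Suc k)) \<le> 12 / (9 * Q)"
    using Q2 Qpos by (intro divide_left_mono) auto
  have "zeta N A S - rr N A S (Suc k) > 0" "zeta N A S - rr N A S (Suc k) \<le> 12 / 3 ^ nn N (Suc (Suc k))"
    "zeta N A T - rr N A T (Suc k) > 0" "zeta N A T - rr N A T (Suc k) \<le> 12 / 3 ^ nn N (Suc (Suc k))"
    using gap[OF assms(1)] by auto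
  moreover have "12 / (9 * Q) < 4 / Q" using Qpos by (simp add: field_simps)
  ultimately show ?thesis using rdiff t by linarith
qed

lemma zeta_loc: assumes "N \<ge> 1"
  shows "\<bar>zeta N A S - real_of_int A / 3 ^ nn N 0\<bar> \<le> 12 / 3 ^ nn N 1"
  using gap[OF assms, of A S 0] unfolding rr_def by simp

lemma pp_mult2: assumes "A mod 4 = 2" shows "multiplicity (2::int) (pp N A S k) = 1"
proof -
  have "pp N A S k mod 4 = A mod 4" by (subst mod_eq_dvd_iff) (rule pp_mod)
  then have m: "pp N A S k mod 4 = 2" using assms by simp
  define w where "w = 2 * (pp N A S k div 4) + 1"
  have w: "pp N A S k = 2 * w" unfolding w_def using m by presburger
  have nw: "\<not> 2 dvd w" unfolding w_def by simp
  have "w \<noteq> 0" using nw by auto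
  then have "multiplicity (2::int) (2 * w) = Suc (multiplicity 2 w)"
    by (intro multiplicity_times_same) auto
  then show ?thesis using w not_dvd_imp_multiplicity_0[OF nw] by simp
qed




lemma bracket:
  fixes s :: "nat \<Rightarrow> int"
  assumes "s K \<le> W" "W < s m" "K \<le> m"
  shows "\<exists>k. K \<le> k \<and> s k \<le> W \<and> W < s (Suc k)"
  using assms
proof (induction m)
  case 0 then show ?case by simp
next
  case (Suc m)
  have Km: "K \<le> m"
  proof (rule ccontr)
    assume "\<not> K \<le> m"
    then have "K = Suc m" using Suc.prems(3) by simp
    then show False using Suc.prems(1,2) by simp
  qed
  show ?case
  proof (cases "s m \<le> W")
    case True then show ?thesis using Km Suc.prems(2) by blast
  next
    case False then show ?thesis using Suc.IH[OF Suc.prems(1) _ Km] by simp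
  qed
qed

lemma mult_2_pow3: "multiplicity (2::int) (3 ^ n) = 0"
proof (rule not_dvd_imp_multiplicity_0)
  show "\<not> (2::int) dvd 3 ^ n" by simp
qed

lemma divide_key:
  fixes v Q z :: real
  assumes "0 < Q" "0 < z" "0 < v" "z * v < Q"
  shows "v / Q < 1 / z"
proof -
  have "v / Q < (Q / z) / Q" using assms by (intro divide_strict_right_mono) (auto simp: field_simps)
  then show ?thesis using assms by simp
qed

lemma zeta_nonL:
  fixes a b :: nat
  assumes N: "N \<ge> 1" and A: "A mod 4 = 2" and zpos: "zeta N A S > 0"
    and a: "a \<ge> 1" and b: "b \<ge> 1" and nd: "\<not> b dvd a"
  shows "zeta N A S powr (real a / real b) \<notin> Liouville_set"
proof
  define \<zeta> where "\<zeta> = zeta N A S"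
  define \<xi> where "\<xi> = \<zeta> powr (real a / real b)"
  assume "zeta N A S powr (real a / real b) \<in> Liouville_set"
  then have "\<xi> \<in> Liouville_set" unfolding \<xi>_def \<zeta>_def .
  then have lv: "\<forall>\<eta>>0. \<forall>X. \<exists>x y. apx \<xi> \<eta> x y \<and> x > X" by (simp add: L_char)
  have z0: "\<zeta> > 0" using zpos unfolding \<zeta>_def .
  have x0: "\<xi> > 0" unfolding \<xi>_def using z0 by simp
  have xib: "\<xi> ^ b = \<zeta> ^ a"
  proof -
    have "\<xi> ^ b = \<xi> powr real b" using x0 by (simp add: powr_realpow)
    also have "\<dots> = \<zeta> powr (real a / real b * real b)" unfolding \<xi>_def by (simp add: powr_powr)
    also have "\<dots> = \<zeta> powr real a" using b by simp
    also have "\<dots> = \<zeta> ^ a" using z0 by (simp add: powr_realpow)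
    finally show ?thesis .
  qed
  define E where "E = 2 * b * (a + 1)"
  have E1: "E \<ge> 1" unfolding E_def using a b by simp
  define C1 where "C1 = real b * (\<xi> + 1) ^ (b - 1)"
  define C2 where "C2 = real a * (\<zeta> + 1) ^ (a - 1)"
  have C1pos: "C1 > 0" unfolding C1_def using b x0 by simp
  have C2pos: "C2 > 0" unfolding C2_def using a z0 by simp
  define K where "K = 2 * a + 12 + nat \<lceil>2 * C1\<rceil> + nat \<lceil>(24 * C2) ^ 2\<rceil>"
  define s where "s = (\<lambda>k. (3::int) ^ ((a + 1) * nn N k))"
  define V where "V = s K"
  obtain v u where apv: "apx \<xi> (real (b + E)) v u" and vV: "v > V"
    using lv by (metis of_nat_0_less_iff add_gr_0 E1 less_le_trans zero_less_one)
  have v1: "v \<ge> 1" and hv: "\<bar>\<xi> - real_of_int u / real_of_int v\<bar> \<le> real_of_int v powr (- real (b + E))"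
    using apv unfolding apx_def by auto
  define vr where "vr = real_of_int v"
  have vr1: "vr \<ge> 1" unfolding vr_def using v1 by simp
  have vrpos: "vr > 0" using vr1 by simp
  have hv': "\<bar>\<xi> - real_of_int u / vr\<bar> \<le> 1 / (vr ^ b * vr ^ E)"
    using hv powr_neg_nat[OF vrpos, of "b + E"] unfolding vr_def by (simp add: power_add)
  define W where "W = v ^ E"
  have "v \<le> W" unfolding W_def using v1 E1
    by (metis One_nat_def power_increasing power_one_right)
  then have sKW: "s K \<le> W" using vV unfolding V_def by simp
  define m where "m = nat W + K"
  have "W < s m"
  proof -
    have "m \<le> (a + 1) * nn N m" using nn_ge[OF N, of m] by (simp add: trans_le_add1)
    then have "real m < (3::real) ^ ((a + 1) * nn N m)"
      using real_lt_3pow[of m] by (smt (verit) of_nat_le_iff one_le_numeral power_increasing)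
    moreover have "W \<le> int m" unfolding m_def by simp
    then have "real_of_int W \<le> real m" by (metis of_int_le_iff of_int_of_nat_eq)
    moreover have "real_of_int (s m) = (3::real) ^ ((a + 1) * nn N m)" unfolding s_def by simp
    ultimately have "real_of_int W < real_of_int (s m)" by linarith
    then show ?thesis by simp
  qed
  moreover have "K \<le> m" unfolding m_def by simp
  ultimately obtain k where kK: "K \<le> k" and sk1: "s k \<le> W" and sk2: "W < s (Suc k)"
    using bracket[of s K W m] sKW by blast
  define q where "q = (3::real) ^ nn N k"
  define Q1 where "Q1 = (3::real) ^ nn N (Suc k)"
  have qk: "q > real k" unfolding q_def using real_lt_3pow[of "nn N k"] nn_ge[OF N, of k] by simp
  have q1: "q \<ge> 1" unfolding q_def by (simp add: one_le_power)
  have qpos: "q > 0" using q1 by simp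
  have Q1q: "Q1 = q ^ (k + 2)" unfolding Q1_def q_def nn_Suc by (metis mult.commute power_mult)
  have Q1pos: "Q1 > 0" unfolding Q1_def by simp
  have qC1: "2 * C1 < q" using qk kK unfolding K_def by linarith
  have qC2: "(24 * C2) ^ 2 < q" using qk kK unfolding K_def by linarith
  have q12: "12 \<le> q" using qk kK unfolding K_def by linarith
  have qa1: "q ^ (a + 1) \<le> vr ^ E"
  proof -
    have "real_of_int (s k) \<le> real_of_int W" using sk1 by simp
    moreover have "real_of_int (s k) = q ^ (a + 1)" unfolding s_def q_def
      by (simp only: of_int_power of_int_numeral) (metis mult.commute power_mult)
    moreover have "real_of_int W = vr ^ E" unfolding W_def vr_def by simp
    ultimately show ?thesis by simp
  qed
  have vQ: "vr ^ (2 * b) < Q1"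
  proof -
    have "real_of_int W < real_of_int (s (Suc k))" using sk2 by simp
    moreover have "real_of_int (s (Suc k)) = Q1 ^ (a + 1)" unfolding s_def Q1_def
      by (simp only: of_int_power of_int_numeral) (metis mult.commute power_mult)
    moreover have "real_of_int W = vr ^ E" unfolding W_def vr_def by simp
    ultimately have "vr ^ E < Q1 ^ (a + 1)" by simp
    moreover have "vr ^ E = (vr ^ (2 * b)) ^ (a + 1)" unfolding E_def by (simp only: power_mult)
    ultimately have "(vr ^ (2 * b)) ^ (a + 1) < Q1 ^ (a + 1)" by simp
    then show ?thesis by (rule power_less_imp_less_base) (use Q1pos in simp)
  qed
  define r where "r = rr N A S k"
  have r_def': "r = real_of_int (pp N A S k) / q" unfolding r_def rr_def q_def ..
  have zr1: "0 < \<zeta> - r" "\<zeta> - r \<le> 12 / Q1" unfolding \<zeta>_def r_def Q1_def using gap[OF N] by auto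
  have Q12: "12 / Q1 \<le> 1"
  proof -
    have "q \<le> Q1" unfolding Q1q using power_increasing[of 1 "k + 2" q] q1 by simp
    then show ?thesis using q12 Q1pos by simp
  qed
  define x where "x = real_of_int u / vr"
  have bx: "\<bar>x ^ b - \<xi> ^ b\<bar> \<le> C1 * \<bar>x - \<xi>\<bar>"
  proof -
    have "\<bar>\<xi> - x\<bar> \<le> 1" unfolding x_def vr_def using apx_le1[OF apv] by simp
    then have "\<bar>x\<bar> \<le> \<xi> + 1" using x0 by linarith
    moreover have "\<bar>\<xi>\<bar> \<le> \<xi> + 1" using x0 by simp
    ultimately show ?thesis unfolding C1_def using pow_diff_bound by blast
  qed
  have bz: "\<bar>\<zeta> ^ a - r ^ a\<bar> \<le> C2 * \<bar>\<zeta> - r\<bar>"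
  proof -
    have "\<bar>r\<bar> \<le> \<zeta> + 1" using zr1 Q12 z0 by linarith
    moreover have "\<bar>\<zeta>\<bar> \<le> \<zeta> + 1" using z0 by simp
    ultimately show ?thesis unfolding C2_def using pow_diff_bound by blast
  qed
  have D: "\<bar>x ^ b - r ^ a\<bar> \<le> C1 / (vr ^ b * vr ^ E) + C2 * 12 / Q1"
  proof -
    have "\<bar>x ^ b - r ^ a\<bar> \<le> \<bar>x ^ b - \<xi> ^ b\<bar> + \<bar>\<zeta> ^ a - r ^ a\<bar>" using xib by linarith
    also have "\<dots> \<le> C1 * \<bar>x - \<xi>\<bar> + C2 * \<bar>\<zeta> - r\<bar>" using bx bz by linarith
    also have "\<dots> \<le> C1 * (1 / (vr ^ b * vr ^ E)) + C2 * (12 / Q1)"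
    proof (intro add_mono mult_left_mono)
      show "\<bar>x - \<xi>\<bar> \<le> 1 / (vr ^ b * vr ^ E)" using hv' unfolding x_def by (simp add: abs_minus_commute)
      show "\<bar>\<zeta> - r\<bar> \<le> 12 / Q1" using zr1 by simp
    qed (use C1pos C2pos in auto)
    finally show ?thesis by simp
  qed
  define Z where "Z = 2 * vr ^ b * q ^ a"
  have Zpos: "Z > 0" unfolding Z_def using vrpos qpos by simp
  have T1: "C1 / (vr ^ b * vr ^ E) < 1 / Z"
  proof -
    have "2 * C1 * q ^ a < q * q ^ a" using qC1 qpos by simp
    also have "\<dots> = q ^ (a + 1)" by simp
    also have "\<dots> \<le> vr ^ E" by (rule qa1)
    finally have h: "2 * C1 * q ^ a < vr ^ E" .
    have "Z * C1 < vr ^ b * vr ^ E" unfolding Z_def using h vrpos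
      by (simp add: algebra_simps)
    then have "C1 / (vr ^ b * vr ^ E) < 1 / Z" using divide_key[of "vr ^ b * vr ^ E" Z C1] Zpos vrpos C1pos
      by (simp add: mult.commute)
    then show ?thesis .
  qed
  have T2: "C2 * 12 / Q1 < 1 / Z"
  proof -
    have c3: "(24 * C2 * q ^ a) ^ 2 < Q1"
    proof -
      have "(24 * C2 * q ^ a) ^ 2 = (24 * C2) ^ 2 * q ^ (2 * a)" by (simp add: power_mult_distrib power_mult mult.commute)
      also have "\<dots> < q * q ^ (2 * a)" using qC2 qpos by simp
      also have "\<dots> = q ^ (2 * a + 1)" by simp
      also have "\<dots> \<le> q ^ (k + 2)" using q1 kK unfolding K_def by (intro power_increasing) auto
      finally show ?thesis unfolding Q1q .
    qed
    have "(24 * C2 * q ^ a * vr ^ b) ^ 2 = (24 * C2 * q ^ a) ^ 2 * vr ^ (2 * b)"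
      by (simp add: power_mult_distrib power_mult mult.commute)
    also have "\<dots> < Q1 * Q1" using c3 vQ C2pos qpos vrpos Q1pos by (intro mult_strict_mono) auto
    also have "\<dots> = Q1 ^ 2" by (simp add: power2_eq_square)
    finally have "24 * C2 * q ^ a * vr ^ b < Q1" by (rule power_less_imp_less_base) (use Q1pos in simp)
    then have "Z * (C2 * 12) < Q1" unfolding Z_def by (simp add: algebra_simps)
    then show ?thesis using divide_key[of Q1 Z "C2 * 12"] Zpos Q1pos C2pos by simp
  qed
  have eqxr: "x ^ b = r ^ a"
  proof (rule ccontr)
    assume ne: "x ^ b \<noteq> r ^ a"
    define P where "P = (3::int) ^ nn N k"
    define Nn where "Nn = u ^ b * P ^ a - pp N A S k ^ a * v ^ b"
    have Pq: "real_of_int P = q" unfolding P_def q_def by simp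
    have eqN: "x ^ b - r ^ a = real_of_int Nn / (vr ^ b * q ^ a)"
      unfolding x_def r_def' Nn_def vr_def Pq[symmetric] using v1 qpos Pq
      by (simp add: power_divide field_simps)
    have "Nn \<noteq> 0" using ne eqN by auto
    then have N1: "\<bar>real_of_int Nn\<bar> \<ge> 1" by linarith
    have "1 / (vr ^ b * q ^ a) \<le> \<bar>real_of_int Nn\<bar> / (vr ^ b * q ^ a)"
      using N1 vrpos qpos by (intro divide_right_mono) auto
    also have "\<dots> = \<bar>x ^ b - r ^ a\<bar>" unfolding eqN using vrpos qpos by (simp add: abs_divide)
    also have "\<dots> < 1 / Z + 1 / Z" using D T1 T2 by linarith
    also have "\<dots> = 1 / (vr ^ b * q ^ a)" unfolding Z_def by simp
    finally show False by simp
  qed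
  define P where "P = (3::int) ^ nn N k"
  define p where "p = pp N A S k"
  have Pq: "real_of_int P = q" unfolding P_def q_def by simp
  have ieq: "u ^ b * P ^ a = p ^ a * v ^ b"
  proof -
    have "real_of_int u ^ b / vr ^ b = real_of_int p ^ a / q ^ a"
      using eqxr unfolding x_def r_def' p_def by (simp add: power_divide)
    then have "real_of_int u ^ b * q ^ a = real_of_int p ^ a * vr ^ b"
      using vrpos qpos by (simp add: field_simps)
    then have "real_of_int (u ^ b * P ^ a) = real_of_int (p ^ a * v ^ b)"
      unfolding vr_def Pq[symmetric] by simp
    then show ?thesis by (simp only: of_int_eq_iff)
  qed
  have mp: "multiplicity 2 p = 1" unfolding p_def by (rule pp_mult2[OF A])
  have p0: "p \<noteq> 0" using mp by auto
  have v0: "v \<noteq> 0" using v1 by simp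
  have P0: "P \<noteq> 0" unfolding P_def by simp
  have u0: "u \<noteq> 0"
  proof
    assume "u = 0"
    then have "u ^ b * P ^ a = 0" using b by simp
    moreover have "p ^ a * v ^ b \<noteq> 0" using p0 v0 by simp
    ultimately show False using ieq by simp
  qed
  have pr: "prime_elem (2::int)" by (simp add: prime_imp_prime_elem)
  have "multiplicity 2 (u ^ b * P ^ a) = b * multiplicity 2 u"
    using pr u0 P0 by (simp add: prime_elem_multiplicity_mult_distrib prime_elem_multiplicity_power_distrib
        P_def mult_2_pow3)
  moreover have "multiplicity 2 (p ^ a * v ^ b) = a + b * multiplicity 2 v"
    using pr p0 v0 mp by (simp add: prime_elem_multiplicity_mult_distrib prime_elem_multiplicity_power_distrib)
  ultimately have "b * multiplicity 2 u = a + b * multiplicity 2 v" using ieq by simp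
  then have "a = b * (multiplicity 2 u - multiplicity 2 v)" by (simp add: diff_mult_distrib2)
  then show False using nd by simp
qed




lemma L_intpow:
  assumes "\<zeta> \<in> Liouville_set" "\<zeta> > 0" "m \<noteq> 0"
  shows "\<zeta> powr (real_of_int m) \<in> Liouville_set"
proof (cases "m > 0")
  case True
  have "\<zeta> powr (real_of_int m) = \<zeta> ^ nat m"
    using assms(2) True by (simp add: powr_realpow[symmetric])
  moreover have "\<zeta> ^ nat m \<in> Liouville_set" using L_pow[OF assms(1,2)] True by simp
  ultimately show ?thesis by simp
next
  case False
  then have m: "m < 0" using assms(3) by simp
  have rm: "real_of_int m = - real (nat (- m))" using m by simp
  have "\<zeta> powr (real_of_int m) = inverse (\<zeta> powr (real (nat (- m))))"
    unfolding rm by (rule powr_minus)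
  also have "\<dots> = 1 / \<zeta> ^ nat (- m)" using assms(2) by (simp add: powr_realpow divide_inverse)
  finally have e: "\<zeta> powr (real_of_int m) = 1 / \<zeta> ^ nat (- m)" .
  have "\<zeta> ^ nat (- m) \<in> Liouville_set" using L_pow[OF assms(1,2)] m by simp
  moreover have "\<zeta> ^ nat (- m) > 0" using assms(2) by simp
  ultimately have "1 / \<zeta> ^ nat (- m) \<in> Liouville_set" by (rule L_inv)
  then show ?thesis using e by simp
qed

lemma nonint_nonL:
  fixes a b :: int
  assumes N: "N \<ge> 1" and A: "A mod 4 = 2" and zpos: "zeta N A S > 0"
    and a: "a \<noteq> 0" and b: "b \<noteq> 0" and ni: "real_of_int a / real_of_int b \<notin> \<int>"
  shows "zeta N A S powr (real_of_int a / real_of_int b) \<notin> Liouville_set"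
proof -
  define a' where "a' = nat \<bar>a\<bar>"
  define b' where "b' = nat \<bar>b\<bar>"
  have a'1: "a' \<ge> 1" and b'1: "b' \<ge> 1" unfolding a'_def b'_def using a b by auto
  have ab: "\<bar>real_of_int a / real_of_int b\<bar> = real a' / real b'"
    unfolding a'_def b'_def by (simp add: abs_divide)
  have nd: "\<not> b' dvd a'"
  proof
    assume "b' dvd a'"
    then obtain t where t: "a' = b' * t" by (auto simp: dvd_def)
    then have "real a' / real b' = real t" using b'1 by simp
    then have "\<bar>real_of_int a / real_of_int b\<bar> \<in> \<int>" using ab by simp
    then have "real_of_int a / real_of_int b \<in> \<int>"
      by (metis Ints_minus abs_minus_cancel abs_of_nonneg abs_of_nonpos linear minus_minus)
    then show False using ni by simp
  qed
  have base: "zeta N A S powr (real a' / real b') \<notin> Liouville_set"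
    by (rule zeta_nonL[OF N A zpos a'1 b'1 nd])
  show ?thesis
  proof (cases "real_of_int a / real_of_int b \<ge> 0")
    case True
    have "real_of_int a / real_of_int b = \<bar>real_of_int a / real_of_int b\<bar>"
      by (rule abs_of_nonneg[OF True, symmetric])
    also note ab
    finally show ?thesis using base by simp
  next
    case False
    have "real_of_int a / real_of_int b = - \<bar>real_of_int a / real_of_int b\<bar>"
      using False by (simp only: abs_of_neg not_le minus_minus)
    also note ab
    finally have e: "real_of_int a / real_of_int b = - (real a' / real b')" .
    show ?thesis
    proof
      assume "zeta N A S powr (real_of_int a / real_of_int b) \<in> Liouville_set"
      then have h: "1 / zeta N A S powr (real a' / real b') \<in> Liouville_set"
        unfolding e using zpos by (simp add: powr_minus divide_inverse)
      have pos: "1 / zeta N A S powr (real a' / real b') > 0" using zpos by simp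
      have "1 / (1 / zeta N A S powr (real a' / real b')) \<in> Liouville_set"
        by (rule L_inv[OF h pos])
      then show False using base by simp
    qed
  qed
qed

lemma good_set:
  fixes I :: "real set"
  assumes I: "I \<subseteq> {0<..}" and int: "interior I \<noteq> {}"
  shows "uncountable {\<zeta> \<in> Liouville_set \<inter> I.
               \<forall>a b :: int. a \<noteq> 0 \<longrightarrow> b \<noteq> 0 \<longrightarrow>
                 (f_pow a b \<zeta> \<in> Liouville_set \<longleftrightarrow>
                  real_of_int a / real_of_int b \<in> \<int>)}" (is "uncountable ?G")
proof -
  obtain c where c: "c \<in> interior I" using int by blast
  then obtain \<delta> where \<delta>: "\<delta> > 0" "ball c \<delta> \<subseteq> I" using mem_interior by blast
  define N where "N = nat \<lceil>14 / \<delta>\<rceil> + 1"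
  have N1: "N \<ge> 1" unfolding N_def by simp
  define M where "M = (3::real) ^ nn N 0"
  have Mpos: "M > 0" unfolding M_def by simp
  have "real N \<le> real (nn N 0)" unfolding nn_def by simp
  then have "real N < M" unfolding M_def using real_lt_3pow[of "nn N 0"] by linarith
  moreover have "14 / \<delta> \<le> real N" unfolding N_def by linarith
  ultimately have "14 / \<delta> < M" by linarith
  then have M14: "14 / M < \<delta>" using \<delta>(1) Mpos by (simp add: field_simps)
  have MM1: "M \<le> 3 ^ nn N 1" unfolding M_def using nn_mono[OF N1, of 0 1] by (intro power_increasing) auto
  define A where "A = 4 * \<lfloor>c * M / 4\<rfloor> + 2"
  have A4: "A mod 4 = 2" unfolding A_def by simp
  have Ac: "\<bar>real_of_int A / M - c\<bar> \<le> 2 / M"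
  proof -
    have f1: "real_of_int \<lfloor>c * M / 4\<rfloor> \<le> c * M / 4" by (rule of_int_floor_le)
    have f2: "c * M / 4 < real_of_int \<lfloor>c * M / 4\<rfloor> + 1" by (rule real_of_int_floor_add_one_gt)
    have rA: "real_of_int A = 4 * real_of_int \<lfloor>c * M / 4\<rfloor> + 2" unfolding A_def by simp
    have "\<bar>real_of_int A - c * M\<bar> \<le> 2" unfolding rA abs_le_iff using f1 f2 by linarith
    then have "\<bar>(real_of_int A - c * M) / M\<bar> \<le> 2 / M" using Mpos by (simp add: abs_divide divide_right_mono)
    moreover have "(real_of_int A - c * M) / M = real_of_int A / M - c" using Mpos by (simp add: field_simps)
    ultimately show ?thesis by simp
  qed
  have inI: "zeta N A S \<in> I" for S
  proof -
    have "\<bar>zeta N A S - real_of_int A / M\<bar> \<le> 12 / 3 ^ nn N 1" unfolding M_def by (rule zeta_loc[OF N1])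
    also have "\<dots> \<le> 12 / M" using MM1 Mpos by (intro divide_left_mono) auto
    finally have "\<bar>zeta N A S - c\<bar> \<le> 14 / M" using Ac by linarith
    then have "dist c (zeta N A S) < \<delta>" using M14 by (simp add: dist_real_def abs_minus_commute)
    then show ?thesis using \<delta>(2) by auto
  qed
  have zpos: "zeta N A S > 0" for S using inI[of S] I by auto
  have sub1: "zeta N A S \<in> ?G" for S
    proof (intro CollectI conjI IntI allI impI)
      show "zeta N A S \<in> Liouville_set" by (rule zeta_L[OF N1])
      show "zeta N A S \<in> I" by (rule inI)
      fix a b :: int assume a: "a \<noteq> 0" and b: "b \<noteq> 0"
      show "f_pow a b (zeta N A S) \<in> Liouville_set \<longleftrightarrow> real_of_int a / real_of_int b \<in> \<int>"
      proof
        assume "f_pow a b (zeta N A S) \<in> Liouville_set"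
        then show "real_of_int a / real_of_int b \<in> \<int>"
          using nonint_nonL[OF N1 A4 zpos a b] unfolding f_pow_def by blast
      next
        assume "real_of_int a / real_of_int b \<in> \<int>"
        then obtain t where t: "real_of_int a / real_of_int b = real_of_int t" by (auto elim: Ints_cases)
        have "t \<noteq> 0" using t a b by auto
        then show "f_pow a b (zeta N A S) \<in> Liouville_set"
          unfolding f_pow_def t using L_intpow[OF zeta_L[OF N1] zpos] by blast
      qed
    qed
  have sub: "range (zeta N A) \<subseteq> ?G" using sub1 by blast
  have inj: "inj (zeta N A)" using zeta_inj[OF N1] by (auto simp: inj_def)
  have unc: "uncountable (UNIV :: nat set set)"
    by (metis Cantors_theorem Pow_UNIV empty_not_UNIV range_from_nat_into)
  have "uncountable (range (zeta N A))"
  proof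
    assume "countable (range (zeta N A))"
    then have "countable (UNIV :: nat set set)" using countable_image_inj_on inj by blast
    then show False using unc by simp
  qed
  then show ?thesis using sub countable_subset by blast
qed



theorem theorem6p2:
  shows "(\<forall>I :: real set. I \<subseteq> {0<..} \<longrightarrow> interior I \<noteq> {} \<longrightarrow>
            uncountable {\<zeta> \<in> Liouville_set \<inter> I.
               \<forall>a b :: int. a \<noteq> 0 \<longrightarrow> b \<noteq> 0 \<longrightarrow>
                 (f_pow a b \<zeta> \<in> Liouville_set \<longleftrightarrow>
                  real_of_int a / real_of_int b \<in> \<int>)})
       \<and> (\<forall>a b :: int. a \<noteq> 0 \<longrightarrow> b \<noteq> 0 \<longrightarrow> coprime a b \<longrightarrow> \<bar>b\<bar> \<ge> 2 \<longrightarrow>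
            uncountable (f_pow a b ` (Liouville_set \<inter> {0<..}) \<inter> Liouville_set) \<and>
            \<not> (f_pow a b ` (Liouville_set \<inter> {0<..}) \<subseteq> Liouville_set))"
proof (intro conjI allI impI)
  fix I :: "real set"
  assume "I \<subseteq> {0<..}" "interior I \<noteq> {}"
  then show "uncountable {\<zeta> \<in> Liouville_set \<inter> I.
               \<forall>a b :: int. a \<noteq> 0 \<longrightarrow> b \<noteq> 0 \<longrightarrow>
                 (f_pow a b \<zeta> \<in> Liouville_set \<longleftrightarrow>
                  real_of_int a / real_of_int b \<in> \<int>)}" by (rule good_set)
next
  fix a b :: int
  assume a0: "a \<noteq> 0" and b0: "b \<noteq> 0" and cop: "coprime a b" and b2: "\<bar>b\<bar> \<ge> 2"
  define H where "H = {\<zeta> \<in> Liouville_set \<inter> {0<..}.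
               \<forall>a b :: int. a \<noteq> 0 \<longrightarrow> b \<noteq> 0 \<longrightarrow>
                 (f_pow a b \<zeta> \<in> Liouville_set \<longleftrightarrow>
                  real_of_int a / real_of_int b \<in> \<int>)}"
  have "interior {0<..} = ({0<..} :: real set)" by (rule interior_open) simp
  then have "(1::real) \<in> interior {0<..}" by simp
  then have "interior {0<..} \<noteq> ({} :: real set)" by blast
  then have Hunc: "uncountable H" unfolding H_def by (intro good_set) auto
  have ni: "real_of_int a / real_of_int b \<notin> \<int>"
  proof
    assume "real_of_int a / real_of_int b \<in> \<int>"
    then obtain t where t: "real_of_int a / real_of_int b = real_of_int t" by (auto elim: Ints_cases)
    then have "real_of_int a = real_of_int b * real_of_int t" using b0 by (simp add: field_simps)
    then have "a = b * t" by (metis of_int_eq_iff of_int_mult)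
    then have "b dvd a" by simp
    then have "is_unit b" using coprime_common_divisor[OF cop] by auto
    then have "\<bar>b\<bar> = 1" by (simp add: zdvd1_eq)
    then show False using b2 by simp
  qed
  have LH: "H \<subseteq> Liouville_set \<inter> {0<..}" unfolding H_def by auto
  show "\<not> (f_pow a b ` (Liouville_set \<inter> {0<..}) \<subseteq> Liouville_set)"
  proof
    assume sub: "f_pow a b ` (Liouville_set \<inter> {0<..}) \<subseteq> Liouville_set"
    have "H \<noteq> {}" using Hunc by auto
    then obtain \<zeta> where z: "\<zeta> \<in> H" by blast
    then have "f_pow a b \<zeta> \<notin> Liouville_set" using ni a0 b0 unfolding H_def by auto
    moreover have "f_pow a b \<zeta> \<in> Liouville_set" using sub z LH by auto
    ultimately show False by simp
  qed
  define g where "g = (\<lambda>\<xi>::real. \<xi> powr real_of_int a)"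
  have gsub: "g ` (Liouville_set \<inter> {0<..}) \<subseteq> f_pow a b ` (Liouville_set \<inter> {0<..}) \<inter> Liouville_set"
  proof
    fix y assume "y \<in> g ` (Liouville_set \<inter> {0<..})"
    then obtain \<xi> where \<xi>: "\<xi> \<in> Liouville_set" "\<xi> > 0" and y: "y = g \<xi>" by auto
    have "g \<xi> \<in> Liouville_set" unfolding g_def by (rule L_intpow[OF \<xi> a0])
    moreover have "\<xi> powr real_of_int b \<in> Liouville_set \<inter> {0<..}"
      using L_intpow[OF \<xi> b0] \<xi>(2) by simp
    moreover have "f_pow a b (\<xi> powr real_of_int b) = g \<xi>"
      unfolding f_pow_def g_def using b0 by (simp add: powr_powr)
    ultimately show "y \<in> f_pow a b ` (Liouville_set \<inter> {0<..}) \<inter> Liouville_set"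
      unfolding y by (metis IntI image_eqI)
  qed
  have inj: "inj_on g (Liouville_set \<inter> {0<..})"
  proof (rule inj_onI)
    fix x y assume x: "x \<in> Liouville_set \<inter> {0<..}" and y: "y \<in> Liouville_set \<inter> {0<..}" and e: "g x = g y"
    have "x = (g x) powr (1 / real_of_int a)" unfolding g_def using x a0 by (simp add: powr_powr)
    also have "\<dots> = (g y) powr (1 / real_of_int a)" using e by simp
    also have "\<dots> = y" unfolding g_def using y a0 by (simp add: powr_powr)
    finally show "x = y" .
  qed
  have "uncountable (Liouville_set \<inter> {0<..})" using Hunc LH countable_subset by blast
  then have "uncountable (g ` (Liouville_set \<inter> {0<..}))"
    using countable_image_inj_on inj by blast
  then show "uncountable (f_pow a b ` (Liouville_set \<inter> {0<..}) \<inter> Liouville_set)"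
    using gsub countable_subset by blast
qed


end
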